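(* Let $n\ge 2$, $PS$ be strictly proper, and let $k$ be an integer with $1\le k\le k_B$. Let $(\bar\beta_\ell,\bar\beta_h)\in\mathbb R^2$ satisfy $\bar\beta_\ell\le 1$, $\bar\beta_h\le 1$ and $\bar\beta_h+\frac{P(\ell\mid \ell)}{P(h\mid \ell)}\bar\beta_\ell\ge 1$. Then $u(\bar\beta_\ell,\bar\beta_h\mid \ell)\le u(\Sigma^*\mid \ell)$, with equality only when $(\bar\beta_\ell,\bar\beta_h)=(0,1)$.
   Context: Peer prediction setting with signals $\{\ell,h\}$ and a symmetric prior. $P(s\mid s')$ denotes the probability that another agent has signal $s$ given that one's own signal is $s'$, and $P_{s'}=P(\cdot\mid s')$. Standing assumptions: $P(h\mid h)>P(h\mid\ell)$, $P(h\mid\ell)>0$ and $P(\ell\mid h)>0$. $PS$ is a strictly proper scoring rule on $\{\ell,h\}$. For $\beta'\in\mathbb R$ and $(\beta_\ell,\beta_h)\in\mathbb R^2$, let $q=P(h\mid \ell)\beta_h+P(\ell\mid \ell)\beta_\ell$ and define $$f^\ell(\beta',(\beta_\ell,\beta_h))=\beta'\big[q\,PS(h,P_h)+(1-q)PS(\ell,P_h)\big]+(1-\beta')\big[q\,PS(h,P_\ell)+(1-q)PS(\ell,P_\ell)\big].$$ Define $$u(\bar\beta_\ell,\bar\beta_h\mid \ell)=\tfrac{n-k}{n-1}f^\ell(\bar\beta_\ell,(0,1))+\tfrac{k-1}{n-1}f^\ell(\bar\beta_\ell,(\bar\beta_\ell,\bar\beta_h)).$$ This is the interim utility of a signal-$\ell$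 deviator when $k$ deviators all play $(\bar\beta_\ell,\bar\beta_h)$, i.e. report $h$ with probability $\bar\beta_\ell$ given signal $\ell$ and with probability $\bar\beta_h$ given signal $h$, and the remaining $n-k$ agents report truthfully. The truthful interim utility is $u(\Sigma^*\mid \ell)=P(h\mid \ell)PS(h,P_\ell)+P(\ell\mid \ell)PS(\ell,P_\ell)$. $k_B=\min(k_B^h,k_B^\ell,n)$, where $k_B^h=\lceil (n-1)\mathbb E_{s\sim P_\ell}[PS(s,P_\ell)-PS(s,P_h)]/(P(\ell\mid\ell)(PS(h,P_h)-PS(\ell,P_h)))\rceil$ if $PS(h,P_h)>PS(\ell,P_h)$ and $k_B^h=n$ otherwise; and $k_B^\ell=\lceil (n-1)\mathbb E_{s\sim P_h}[PS(s,P_h)-PS(s,P_\ell)]/(P(h\mid h)(PS(\ell,P_\ell)-PS(h,P_\ell)))\rceil$ if $PS(\ell,P_\ell)>PS(h,P_\ell)$ and $k_B^\ell=n$ otherwise. *)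

theory Defs
  imports Complex_Main
begin

datatype sig = L | H

definition is_dist :: "(sig \<Rightarrow> real) \<Rightarrow> bool" where
  "is_dist p \<longleftrightarrow> p L \<ge> 0 \<and> p H \<ge> 0 \<and> p L + p H = 1"

definition exp_score :: "(sig \<Rightarrow> (sig \<Rightarrow> real) \<Rightarrow> real) \<Rightarrow> (sig \<Rightarrow> real) \<Rightarrow> (sig \<Rightarrow> real) \<Rightarrow> real" where
  "exp_score PS p q = p L * PS L q + p H * PS H q"

definition strictly_proper :: "(sig \<Rightarrow> (sig \<Rightarrow> real) \<Rightarrow> real) \<Rightarrow> bool" where
  "strictly_proper PS \<longleftrightarrow>
     (\<forall>p q. is_dist p \<longrightarrow> is_dist q \<longrightarrow> p \<noteq> q \<longrightarrow> exp_score PS p q < exp_score PS p p)"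

(* Pc s s' = P(s | s'); the posterior P_{s'} *)
definition post :: "(sig \<Rightarrow> sig \<Rightarrow> real) \<Rightarrow> sig \<Rightarrow> sig \<Rightarrow> real" where
  "post Pc s' = (\<lambda>s. Pc s s')"

definition f_l :: "(sig \<Rightarrow> sig \<Rightarrow> real) \<Rightarrow> (sig \<Rightarrow> (sig \<Rightarrow> real) \<Rightarrow> real)
                   \<Rightarrow> real \<Rightarrow> real \<Rightarrow> real \<Rightarrow> real" where
  "f_l Pc PS b' bl bh =
     (let q = Pc H L * bh + Pc L L * bl in
       b' * (q * PS H (post Pc H) + (1 - q) * PS L (post Pc H))
       + (1 - b') * (q * PS H (post Pc L) + (1 - q) * PS L (post Pc L)))"

definition u_dev_l :: "(sig \<Rightarrow> sig \<Rightarrow> real) \<Rightarrow> (sig \<Rightarrow> (sig \<Rightarrow> real) \<Rightarrow> real)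
                   \<Rightarrow> nat \<Rightarrow> nat \<Rightarrow> real \<Rightarrow> real \<Rightarrow> real" where
  "u_dev_l Pc PS n k bl bh =
     (real n - real k) / (real n - 1) * f_l Pc PS bl 0 1
     + (real k - 1) / (real n - 1) * f_l Pc PS bl bl bh"

definition u_truth_l :: "(sig \<Rightarrow> sig \<Rightarrow> real) \<Rightarrow> (sig \<Rightarrow> (sig \<Rightarrow> real) \<Rightarrow> real) \<Rightarrow> real" where
  "u_truth_l Pc PS = Pc H L * PS H (post Pc L) + Pc L L * PS L (post Pc L)"

definition kB_h :: "(sig \<Rightarrow> sig \<Rightarrow> real) \<Rightarrow> (sig \<Rightarrow> (sig \<Rightarrow> real) \<Rightarrow> real) \<Rightarrow> nat \<Rightarrow> int" where
  "kB_h Pc PS n =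
     (if PS H (post Pc H) > PS L (post Pc H) then
        \<lceil>(real n - 1) * (exp_score PS (post Pc L) (post Pc L) - exp_score PS (post Pc L) (post Pc H))
           / (Pc L L * (PS H (post Pc H) - PS L (post Pc H)))\<rceil>
      else int n)"

definition kB_l :: "(sig \<Rightarrow> sig \<Rightarrow> real) \<Rightarrow> (sig \<Rightarrow> (sig \<Rightarrow> real) \<Rightarrow> real) \<Rightarrow> nat \<Rightarrow> int" where
  "kB_l Pc PS n =
     (if PS L (post Pc L) > PS H (post Pc L) then
        \<lceil>(real n - 1) * (exp_score PS (post Pc H) (post Pc H) - exp_score PS (post Pc H) (post Pc L))
           / (Pc H H * (PS L (post Pc L) - PS H (post Pc L)))\<rceil>
      else int n)"

definition kB :: "(sig \<Rightarrow> sig \<Rightarrow> real) \<Rightarrow> (sig \<Rightarrow> (sig \<Rightarrow> real) \<Rightarrow> real) \<Rightarrow> nat \<Rightarrow> int" where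
  "kB Pc PS n = min (kB_h Pc PS n) (min (kB_l Pc PS n) (int n))"

end

theory Submission
  imports Defs
begin

lemma core:
  fixes a A X Y Dl bl bh c q E :: real
  assumes A: "A > 0" and a: "a > 0" and Dl: "Dl > 0"
    and bl0: "0 \<le> bl" and bh: "bh \<le> 1"
    and q: "q = a * bh + A * bl" and qa: "q \<ge> a"
    and c0: "0 \<le> c"
    and E: "E = bl * X + (1 - bl) * Y" and XY: "X > Y" and bl1: "bl \<le> 1"
    and cX: "X > 0 \<Longrightarrow> c * A * X < Dl"
    and U: "U = T - bl * Dl + c * (q - a) * E"
  shows "U \<le> T \<and> (U = T \<longrightarrow> bl = 0 \<and> bh = 1)"
proof (cases "E \<le> 0")
  case True
  have "c * (q - a) * E \<le> 0"
    using True c0 qa by (simp add: mult_nonneg_nonpos)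
  moreover have "bl * Dl \<ge> 0" using bl0 Dl by simp
  ultimately have le: "U \<le> T" using U by linarith
  show ?thesis
  proof (rule conjI[OF le], rule impI)
    assume "U = T"
    then have "bl * Dl = 0" using U \<open>c * (q - a) * E \<le> 0\<close> \<open>bl * Dl \<ge> 0\<close> by linarith
    then have "bl = 0" using Dl by simp
    then have "a * bh \<ge> a * 1" using q qa by simp
    then have "bh = 1" using bh a by (simp add: mult_le_cancel_left_pos)
    with \<open>bl = 0\<close> show "bl = 0 \<and> bh = 1" by simp
  qed
next
  case False
  then have Epos: "E > 0" by simp
  have "E - X = (1 - bl) * (Y - X)" using E by (simp add: algebra_simps)
  moreover have "(1 - bl) * (Y - X) \<le> 0" using XY bl1 by (simp add: mult_nonneg_nonpos)
  ultimately have EX: "E \<le> X" by linarith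
  have Xpos: "X > 0"
  proof (rule ccontr)
    assume "\<not> X > 0"
    then have "Y < 0" "X \<le> 0" using XY by auto
    then have "bl * X \<le> 0" "(1 - bl) * Y \<le> 0" using bl0 bl1
      by (auto simp: mult_nonneg_nonpos)
    then show False using E Epos by linarith
  qed
  have "a * (bh - 1) \<le> 0" using bh a by (simp add: mult_nonneg_nonpos)
  then have qaA: "q - a \<le> A * bl" using q by (simp add: algebra_simps)
  have "c * (q - a) * E \<le> c * (A * bl) * E"
    using qaA c0 Epos by (simp add: mult_right_mono mult_left_mono)
  also have "\<dots> \<le> c * (A * bl) * X"
    using EX c0 A bl0 by (simp add: mult_left_mono)
  finally have h1: "c * (q - a) * E \<le> bl * (c * A * X)" by (simp add: algebra_simps)
  have cAX: "c * A * X < Dl" using cX Xpos by simp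
  have "bl * (c * A * X) \<le> bl * Dl" using cAX bl0 by (simp add: mult_left_mono)
  then have le: "U \<le> T" using U h1 by linarith
  show ?thesis
  proof (rule conjI[OF le], rule impI)
    assume "U = T"
    have "bl = 0"
    proof (rule ccontr)
      assume "bl \<noteq> 0"
      then have "bl > 0" using bl0 by simp
      then have "bl * (c * A * X) < bl * Dl" using cAX by simp
      then show False using U h1 \<open>U = T\<close> by linarith
    qed
    then have "a * bh \<ge> a * 1" using q qa by simp
    then have "bh = 1" using bh a by (simp add: mult_le_cancel_left_pos)
    with \<open>bl = 0\<close> show "bl = 0 \<and> bh = 1" by simp
  qed
qed

theorem lemma2:
  fixes Pc :: "sig \<Rightarrow> sig \<Rightarrow> real"
    and PS :: "sig \<Rightarrow> (sig \<Rightarrow> real) \<Rightarrow> real"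
    and n k :: nat and bl bh :: real
  assumes dist_L: "is_dist (post Pc L)" and dist_H: "is_dist (post Pc H)"
    and inf: "Pc H H > Pc H L" and pos_hl: "Pc H L > 0" and pos_lh: "Pc L H > 0"
    and PS: "strictly_proper PS"
    and n: "n \<ge> 2"
    and k: "1 \<le> k" "int k \<le> kB Pc PS n"
    and bl: "bl \<le> 1" and bh: "bh \<le> 1"
    and cone: "bh + Pc L L / Pc H L * bl \<ge> 1"
  shows "u_dev_l Pc PS n k bl bh \<le> u_truth_l Pc PS
         \<and> (u_dev_l Pc PS n k bl bh = u_truth_l Pc PS \<longrightarrow> (bl, bh) = (0, 1))"
proof -
  define a where "a = Pc H L"
  define A where "A = Pc L L"
  define b where "b = Pc H H"
  define B where "B = Pc L H"
  define x1 where "x1 = PS H (post Pc H)"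
  define x0 where "x0 = PS L (post Pc H)"
  define y1 where "y1 = PS H (post Pc L)"
  define y0 where "y0 = PS L (post Pc L)"
  have sA: "A + a = 1" "A \<ge> 0" using dist_L by (auto simp: is_dist_def post_def A_def a_def)
  have sB: "B + b = 1" "B \<ge> 0" "b \<ge> 0" using dist_H by (auto simp: is_dist_def post_def B_def b_def)
  have A1: "A = 1 - a" and B1: "B = 1 - b" using sA sB by auto
  have a: "a > 0" "b > a" using pos_hl inf by (auto simp: a_def b_def)
  have Apos: "A > 0" using sA sB a by linarith
  have neq: "post Pc L \<noteq> post Pc H"
  proof
    assume "post Pc L = post Pc H"
    then have "post Pc L H = post Pc H H" by simp
    then show False using inf by (simp add: post_def)
  qed
  have "exp_score PS (post Pc L) (post Pc H) < exp_score PS (post Pc L) (post Pc L)"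
    using PS dist_L dist_H neq by (simp add: strictly_proper_def)
  then have DlG: "A * (y0 - x0) + a * (y1 - x1) > 0"
    by (simp add: exp_score_def post_def A_def a_def x0_def x1_def y0_def y1_def algebra_simps)
  define Dl where "Dl = A * (y0 - x0) + a * (y1 - x1)"
  have "exp_score PS (post Pc H) (post Pc L) < exp_score PS (post Pc H) (post Pc H)"
    using PS dist_L dist_H neq by (simp add: strictly_proper_def)
  then have DhG: "B * (x0 - y0) + b * (x1 - y1) > 0"
    by (simp add: exp_score_def post_def B_def b_def x0_def x1_def y0_def y1_def algebra_simps)
  have "(b - a) * ((x1 - x0) - (y1 - y0)) = B * (x0 - y0) + b * (x1 - y1) + Dl"
    using sA sB unfolding Dl_def
    by (simp add: algebra_simps eq_diff_eq[symmetric] A1 B1)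
  then have "(b - a) * ((x1 - x0) - (y1 - y0)) > 0" using DhG DlG Dl_def by linarith
  then have XY: "x1 - x0 > y1 - y0" using a by (simp add: zero_less_mult_iff)
  have bl0: "bl \<ge> 0"
  proof (rule ccontr)
    assume "\<not> bl \<ge> 0"
    then have "A / a * bl < 0" using Apos a by (intro mult_pos_neg) auto
    then show False using cone bh by (simp add: A_def a_def)
  qed
  define q where "q = a * bh + A * bl"
  have qa: "q \<ge> a"
  proof -
    have "a * (bh + A / a * bl) \<ge> a * 1" using cone a by (simp add: A_def a_def)
    then show ?thesis using a by (simp add: q_def algebra_simps)
  qed
  define c where "c = (real k - 1) / (real n - 1)"
  have n1: "real n - 1 > 0" using n by simp
  have c0: "c \<ge> 0" using k n1 unfolding c_def by simp
  define E where "E = bl * (x1 - x0) + (1 - bl) * (y1 - y0)"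
  have kk: "int k \<le> kB_h Pc PS n" using k by (simp add: kB_def)
  have cX: "c * A * (x1 - x0) < Dl" if X: "x1 - x0 > 0"
  proof -
    have gt: "PS H (post Pc H) > PS L (post Pc H)" using X by (simp add: x1_def x0_def)
    have ed: "exp_score PS (post Pc L) (post Pc L) - exp_score PS (post Pc L) (post Pc H) = Dl"
      by (simp add: exp_score_def post_def Dl_def A_def a_def x0_def x1_def y0_def y1_def algebra_simps)
    define r where "r = (real n - 1) * Dl / (A * (x1 - x0))"
    have "int k \<le> \<lceil>r\<rceil>" using kk gt ed
      by (simp add: kB_h_def r_def A_def x1_def x0_def)
    then have "int k - 1 < \<lceil>r\<rceil>" by simp
    then have "of_int (int k - 1) < r" by (simp only: less_ceiling_iff)
    then have "real k - 1 < r" by simp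
    then have "(real k - 1) * (A * (x1 - x0)) < (real n - 1) * Dl"
      using Apos X unfolding r_def by (simp add: field_simps)
    then show ?thesis unfolding c_def using n1 by (simp add: field_simps)
  qed
  have T: "u_truth_l Pc PS = a * y1 + A * y0"
    by (simp add: u_truth_l_def a_def A_def y1_def y0_def)
  have F0: "f_l Pc PS bl 0 1 = (a * y1 + A * y0) - bl * Dl"
    unfolding f_l_def Let_def Dl_def using sA
    by (simp add: A1[unfolded A_def a_def] a_def A_def x0_def x1_def y0_def y1_def algebra_simps)
  have F1: "f_l Pc PS bl bl bh = (a * y1 + A * y0) - bl * Dl + (q - a) * E"
    unfolding f_l_def Let_def Dl_def E_def q_def using sA
    by (simp add: A1[unfolded A_def a_def] a_def A_def x0_def x1_def y0_def y1_def algebra_simps)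
  have U: "u_dev_l Pc PS n k bl bh = (a * y1 + A * y0) - bl * Dl + c * (q - a) * E"
  proof -
    have "u_dev_l Pc PS n k bl bh = (real n - real k) / (real n - 1) * ((a * y1 + A * y0) - bl * Dl)
       + (real k - 1) / (real n - 1) * ((a * y1 + A * y0) - bl * Dl + (q - a) * E)"
      by (simp add: u_dev_l_def F0 F1)
    also have "\<dots> = (a * y1 + A * y0) - bl * Dl + c * (q - a) * E"
    proof -
      define p1 where "p1 = (real n - real k) / (real n - 1)"
      have sum1: "p1 + c = 1" unfolding p1_def c_def using n1
        by (simp add: add_divide_distrib[symmetric])
      have "p1 * ((a * y1 + A * y0) - bl * Dl) + c * ((a * y1 + A * y0) - bl * Dl + (q - a) * E)
         = (p1 + c) * ((a * y1 + A * y0) - bl * Dl) + c * (q - a) * E"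
        by (simp add: algebra_simps)
      then show ?thesis using sum1 unfolding p1_def c_def by simp
    qed
    finally show ?thesis .
  qed
  have "u_dev_l Pc PS n k bl bh \<le> u_truth_l Pc PS
     \<and> (u_dev_l Pc PS n k bl bh = u_truth_l Pc PS \<longrightarrow> bl = 0 \<and> bh = 1)"
    unfolding T
    by (rule core[OF Apos a(1) DlG[folded Dl_def] bl0 bh q_def qa c0 E_def XY bl cX U])
  then show ?thesis by simp
qed

end
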